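(* Let $X$ be a geodesic metric space and let $\Gamma\subset X$ be a topological arc connecting two points $a,b\in X$. Then for every $\varepsilon>0$ there exists a biLipschitz curve contained in the $\varepsilon$-neighborhood of $\Gamma$ and connecting $a$ and $b$.
   Context: A topological arc is a subset homeomorphic to a closed interval. A curve $\gamma\colon[s,t]\to X$ is biLipschitz if there is $K\ge1$ with $K^{-1}|r-r'|\le d(\gamma(r),\gamma(r'))\le K|r-r'|$ for all $r,r'$. *)

theory Defs
  imports "HOL-Analysis.Analysis"
begin

definition geodesic_space :: "'a::metric_space set \<Rightarrow> bool" where
  "geodesic_space S \<longleftrightarrow>
     (\<forall>x\<in>S. \<forall>y\<in>S. \<exists>\<gamma>::real \<Rightarrow> 'a.
        \<gamma> ` {0..dist x y} \<subseteq> S \<and> \<gamma> 0 = x \<and> \<gamma> (dist x y) = y \<and>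
        (\<forall>s\<in>{0..dist x y}. \<forall>t\<in>{0..dist x y}. dist (\<gamma> s) (\<gamma> t) = \<bar>s - t\<bar>))"

definition bilipschitz_on :: "real set \<Rightarrow> (real \<Rightarrow> 'a::metric_space) \<Rightarrow> bool" where
  "bilipschitz_on I \<gamma> \<longleftrightarrow>
     (\<exists>K\<ge>1. \<forall>r\<in>I. \<forall>r'\<in>I.
        \<bar>r - r'\<bar> / K \<le> dist (\<gamma> r) (\<gamma> r') \<and> dist (\<gamma> r) (\<gamma> r') \<le> K * \<bar>r - r'\<bar>)"

definition eps_nbhd :: "real \<Rightarrow> 'a::metric_space set \<Rightarrow> 'a set" where
  "eps_nbhd e A = {x. \<exists>y\<in>A. dist x y < e}"

end

theory Submission
  imports Defs
begin

lemma step: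
  fixes P :: "real \<Rightarrow> 'a::metric_space" and u :: 'a
  assumes geo: "geodesic_space (UNIV :: 'a set)" and L: "0 \<le> L"
    and bl: "bilipschitz_on {0..L} P" and c: "0 < c" "c \<le> 1"
  shows "\<exists>M \<beta>0 Q. 0 \<le> \<beta>0 \<and> \<beta>0 \<le> L \<and> 0 \<le> M \<and> M \<le> dist u (P 0) + c * L \<and>
     bilipschitz_on {0..M + (L - \<beta>0)} Q \<and> Q 0 = u \<and> Q (M + (L - \<beta>0)) = P L \<and>
     (\<forall>r\<in>{0..M + (L - \<beta>0)}. dist (Q r) u \<le> M \<or> (\<exists>\<beta>\<in>{0..L}. Q r = P \<beta>))"
proof -
  obtain K where K1: "K \<ge> 1" and KP: "\<forall>r\<in>{0..L}. \<forall>r'\<in>{0..L}.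
        \<bar>r - r'\<bar> / K \<le> dist (P r) (P r') \<and> dist (P r) (P r') \<le> K * \<bar>r - r'\<bar>"
    using bl unfolding bilipschitz_on_def by blast
  have "K-lipschitz_on {0..L} P"
    unfolding lipschitz_on_def using K1 KP by (auto simp: dist_real_def)
  then have contP: "continuous_on {0..L} P" by (rule lipschitz_on_continuous_on)
  have hc: "continuous_on {0..L} (\<lambda>\<beta>. dist u (P \<beta>) - c * \<beta>)"
    by (intro continuous_intros contP)
  obtain \<beta>0 where b0: "\<beta>0 \<in> {0..L}" and bmin: "\<forall>y\<in>{0..L}. dist u (P \<beta>0) - c * \<beta>0 \<le> dist u (P y) - c * y"
    using continuous_attains_inf[OF compact_Icc _ hc] L by auto
  define M where "M = dist u (P \<beta>0)"
  obtain G :: "real \<Rightarrow> 'a" where G0: "G 0 = u" and GM: "G M = P \<beta>0"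
    and Giso: "\<forall>s\<in>{0..M}. \<forall>t\<in>{0..M}. dist (G s) (G t) = \<bar>s - t\<bar>"
    using geo unfolding geodesic_space_def M_def by blast
  have M0: "0 \<le> M" unfolding M_def by simp
  have Mb: "M \<le> dist u (P 0) + c * L"
  proof -
    have "c * \<beta>0 \<le> c * L" using c b0 by (intro mult_left_mono) auto
    then show ?thesis using bmin[rule_format, of 0] L unfolding M_def by auto
  qed
  define Q where "Q = (\<lambda>r. if r \<le> M then G r else P (\<beta>0 + r - M))"
  define T where "T = M + (L - \<beta>0)"
  have QP: "Q r = P (\<beta>0 + r - M)" if "M \<le> r" for r
    using that GM unfolding Q_def by auto
  have QG: "Q r = G r" if "r \<le> M" for r using that unfolding Q_def by auto
  define K' where "K' = max K (1/c)"
  have K'1: "K' \<ge> 1" and KK': "K \<le> K'"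
    using K1 c unfolding K'_def by auto
  have "1/c \<le> K'" unfolding K'_def by simp
  then have cK: "1/K' \<le> c" using c K'1
  proof -
    have "c * (1/c) \<le> c * K'" using c \<open>1/c \<le> K'\<close> by (intro mult_left_mono) auto
    then have "1 \<le> c * K'" using c by simp
    then show ?thesis using K'1 by (simp add: divide_le_eq mult.commute)
  qed
  have K'pos: "K' > 0" using K'1 by simp
  have main: "\<bar>r - r'\<bar> / K' \<le> dist (Q r) (Q r') \<and> dist (Q r) (Q r') \<le> K' * \<bar>r - r'\<bar>"
    if r: "0 \<le> r" "r \<le> r'" "r' \<le> T" for r r'
  proof (cases "r' \<le> M")
    case True
    have "dist (Q r) (Q r') = \<bar>r - r'\<bar>" using Giso r True QG by auto
    moreover have "\<bar>r - r'\<bar> / K' \<le> \<bar>r - r'\<bar>" using K'1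
      by (simp add: divide_le_eq mult_le_cancel_left1)
    moreover have "\<bar>r - r'\<bar> \<le> K' * \<bar>r - r'\<bar>" using K'1
      by (simp add: mult_le_cancel_right1)
    ultimately show ?thesis by simp
  next
    case False
    show ?thesis
    proof (cases "M \<le> r")
      case True
      have i1: "\<beta>0 + r - M \<in> {0..L}" "\<beta>0 + r' - M \<in> {0..L}" using True r b0 unfolding T_def by auto
      have e: "\<bar>(\<beta>0 + r - M) - (\<beta>0 + r' - M)\<bar> = \<bar>r - r'\<bar>" by simp
      have h: "\<bar>r - r'\<bar> / K \<le> dist (Q r) (Q r') \<and> dist (Q r) (Q r') \<le> K * \<bar>r - r'\<bar>"
        using KP[rule_format, OF i1] True r QP e by simp
      have "\<bar>r - r'\<bar> / K' \<le> \<bar>r - r'\<bar> / K" using KK' K1 by (simp add: frac_le)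
      moreover have "K * \<bar>r - r'\<bar> \<le> K' * \<bar>r - r'\<bar>" using KK' by (simp add: mult_right_mono)
      ultimately show ?thesis using h by linarith
    next
      case F2: False
      define b' where "b' = \<beta>0 + r' - M"
      have b'L: "b' \<in> {0..L}" "\<beta>0 \<le> b'" using False r b0 unfolding T_def b'_def by auto
      have Qr: "Q r = G r" using F2 QG by simp
      have Qr': "Q r' = P b'" using False QP unfolding b'_def by simp
      have dGr: "dist u (G r) = r" using Giso[rule_format, of 0 r] G0 r F2 by auto
      have "dist u (P b') \<le> dist u (G r) + dist (G r) (P b')" by (rule dist_triangle)
      moreover have "M - c * \<beta>0 \<le> dist u (P b') - c * b'" using bmin b'L unfolding M_def by auto
      ultimately have "dist (G r) (P b') \<ge> (M - r) + c * (r' - M)" using dGr unfolding b'_def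
        by (simp add: algebra_simps)
      moreover have "(M - r) \<ge> c * (M - r)" using c F2 by (simp add: mult_left_le_one_le)
      ultimately have low: "dist (G r) (P b') \<ge> c * (r' - r)" by (simp add: algebra_simps)
      have "\<bar>r - r'\<bar> / K' \<le> c * \<bar>r - r'\<bar>" using cK
        by (metis abs_ge_zero divide_inverse inverse_eq_divide mult.commute mult_right_mono)
      with low r have L1: "\<bar>r - r'\<bar> / K' \<le> dist (Q r) (Q r')" using Qr Qr' by simp
      have "dist (G r) (P b') \<le> dist (G r) (G M) + dist (G M) (P b')" by (rule dist_triangle)
      moreover have "dist (G r) (G M) = M - r" using Giso[rule_format, of r M] r F2 by auto
      moreover have "dist (G M) (P b') \<le> K * (r' - M)"
        using KP[rule_format, of \<beta>0 b'] b0 b'L GM unfolding b'_def by auto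
      ultimately have "dist (G r) (P b') \<le> (M - r) + K * (r' - M)" by linarith
      also have "\<dots> \<le> K' * (M - r) + K' * (r' - M)"
        using K'1 KK' F2 False by (intro add_mono mult_right_mono) (auto simp: mult_le_cancel_right1)
      finally have "dist (G r) (P b') \<le> K' * \<bar>r - r'\<bar>" using r by (simp add: algebra_simps)
      with L1 show ?thesis using Qr Qr' by simp
    qed
  qed
  have "bilipschitz_on {0..T} Q"
    unfolding bilipschitz_on_def
  proof (rule exI[of _ K'], rule conjI[OF K'1], intro ballI)
    fix r r' assume "r \<in> {0..T}" "r' \<in> {0..T}"
    then show "\<bar>r - r'\<bar> / K' \<le> dist (Q r) (Q r') \<and> dist (Q r) (Q r') \<le> K' * \<bar>r - r'\<bar>"
      using main[of r r'] main[of r' r] by (cases "r \<le> r'") (auto simp: dist_commute abs_minus_commute)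
  qed
  moreover have "Q 0 = u" using QG M0 G0 by simp
  moreover have "Q T = P L"
    using QP[of T] b0 M0 unfolding T_def by auto
  moreover have "\<forall>r\<in>{0..T}. dist (Q r) u \<le> M \<or> (\<exists>\<beta>\<in>{0..L}. Q r = P \<beta>)"
  proof
    fix r assume r: "r \<in> {0..T}"
    show "dist (Q r) u \<le> M \<or> (\<exists>\<beta>\<in>{0..L}. Q r = P \<beta>)"
    proof (cases "r \<le> M")
      case True
      then have "dist (Q r) u = r" using Giso[rule_format, of r 0] G0 QG r by auto
      then show ?thesis using True by simp
    next
      case False
      then show ?thesis using QP[of r] r b0 unfolding T_def
        by (intro disjI2 bexI[of _ "\<beta>0 + r - M"]) auto
    qed
  qed
  ultimately show ?thesis using b0 M0 Mb unfolding T_def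
    by (intro exI[of _ M] exI[of _ \<beta>0] exI[of _ Q]) auto
qed


theorem lemma4p3:
  fixes \<Gamma> :: "'a::metric_space set" and a b :: 'a and \<epsilon> :: real
  assumes "geodesic_space (UNIV :: 'a set)"
    and "\<exists>g. arc g \<and> path_image g = \<Gamma> \<and> pathstart g = a \<and> pathfinish g = b"
    and "\<epsilon> > 0"
  shows "\<exists>s t (\<gamma>::real \<Rightarrow> 'a). s \<le> t \<and> bilipschitz_on {s..t} \<gamma> \<and>
           \<gamma> ` {s..t} \<subseteq> eps_nbhd \<epsilon> \<Gamma> \<and> \<gamma> s = a \<and> \<gamma> t = b"
proof -
  obtain g where g: "arc g" "path_image g = \<Gamma>" "pathstart g = a" "pathfinish g = b"
    using assms(2) by blast
  have ep: "\<epsilon> > 0" by fact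
  have "continuous_on {0..1} g" using g(1) arc_imp_path path_def by blast
  then have "uniformly_continuous_on {0..1} g"
    by (intro compact_uniformly_continuous) auto
  then obtain d where d: "d > 0" and dd: "\<forall>x\<in>{0..1}. \<forall>x'\<in>{0..1}. dist x' x < d \<longrightarrow> dist (g x') (g x) < \<epsilon>/2"
    unfolding uniformly_continuous_on_def using ep by (meson half_gt_zero)
  obtain N :: nat where N: "1/d < real N" using reals_Archimedean2 by blast
  have Npos: "real N > 0" using N d by (smt (verit) divide_pos_pos)
  have Nd: "1 / real N < d" using N d Npos by (simp add: field_simps)
  have gin: "g x \<in> \<Gamma>" if "x \<in> {0..1}" for x
    using that g(2) unfolding path_image_def by auto
  have claim: "\<exists>L P. 0 \<le> L \<and> bilipschitz_on {0..L} P \<and> P 0 = g (real (N - m) / real N)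
      \<and> P L = b \<and> P ` {0..L} \<subseteq> eps_nbhd \<epsilon> \<Gamma>" if "m \<le> N" for m
    using that
  proof (induction m)
    case 0
    have "bilipschitz_on {0..0} (\<lambda>_::real. b)" unfolding bilipschitz_on_def by auto
    moreover have "b \<in> eps_nbhd \<epsilon> \<Gamma>" using g ep gin[of 1] unfolding eps_nbhd_def pathfinish_def
      by (intro CollectI bexI[of _ b]) auto
    ultimately show ?case using Npos g(4) unfolding pathfinish_def
      by (intro exI[of _ 0] exI[of _ "\<lambda>_::real. b"]) auto
  next
    case (Suc m)
    then obtain L P where LP: "0 \<le> L" "bilipschitz_on {0..L} P" "P 0 = g (real (N - m) / real N)"
      "P L = b" "P ` {0..L} \<subseteq> eps_nbhd \<epsilon> \<Gamma>" by auto
    define x where "x = real (N - Suc m) / real N"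
    define y where "y = real (N - m) / real N"
    have xy: "y = x + 1 / real N" unfolding x_def y_def using Suc.prems Npos
      by (simp add: of_nat_diff field_simps)
    have x01: "x \<in> {0..1}" "y \<in> {0..1}" unfolding x_def y_def using Npos by auto
    have dxy: "dist (g y) (g x) < \<epsilon>/2" using dd x01 xy Nd by (auto simp: dist_real_def)
    define c where "c = min 1 (\<epsilon> / (2 * (L + 1)))"
    have c: "0 < c" "c \<le> 1" unfolding c_def using ep LP(1) by auto
    have cL: "c * L < \<epsilon> / 2"
    proof -
      have "c * L \<le> \<epsilon> / (2 * (L + 1)) * L" unfolding c_def using LP(1)
        by (intro mult_right_mono) auto
      also have "\<dots> < \<epsilon> / 2" using LP(1) ep by (simp add: field_simps)
      finally show ?thesis .
    qed
    obtain M \<beta>0 Q where S: "0 \<le> \<beta>0" "\<beta>0 \<le> L" "0 \<le> M" "M \<le> dist (g x) (P 0) + c * L"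
      "bilipschitz_on {0..M + (L - \<beta>0)} Q" "Q 0 = g x" "Q (M + (L - \<beta>0)) = P L"
      "\<forall>r\<in>{0..M + (L - \<beta>0)}. dist (Q r) (g x) \<le> M \<or> (\<exists>\<beta>\<in>{0..L}. Q r = P \<beta>)"
      using step[OF assms(1) LP(1) LP(2) c, of "g x"] by blast
    have Me: "M < \<epsilon>" using S(4) dxy cL LP(3) unfolding y_def by (simp add: dist_commute)
    have "Q ` {0..M + (L - \<beta>0)} \<subseteq> eps_nbhd \<epsilon> \<Gamma>"
    proof
      fix z assume "z \<in> Q ` {0..M + (L - \<beta>0)}"
      then obtain r where r: "r \<in> {0..M + (L - \<beta>0)}" "z = Q r" by auto
      show "z \<in> eps_nbhd \<epsilon> \<Gamma>"
      proof (cases "dist (Q r) (g x) \<le> M")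
        case True
        then show ?thesis using r Me gin[OF x01(1)] unfolding eps_nbhd_def
          by (intro CollectI bexI[of _ "g x"]) auto
      next
        case False
        then obtain \<beta> where "\<beta> \<in> {0..L}" "Q r = P \<beta>" using S(8) r by blast
        then show ?thesis using LP(5) r by auto
      qed
    qed
    then show ?case using S LP(4) unfolding x_def
      by (intro exI[of _ "M + (L - \<beta>0)"] exI[of _ Q]) auto
  qed
  obtain L P where LP: "0 \<le> L" "bilipschitz_on {0..L} P" "P 0 = g (real (N - N) / real N)"
      "P L = b" "P ` {0..L} \<subseteq> eps_nbhd \<epsilon> \<Gamma>" using claim[of N] by blast
  have "P 0 = a" using LP(3) g(3) unfolding pathstart_def by simp
  then show ?thesis using LP by blast
qed

end
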